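(* Let $G$ be a simple graph of order $n$ and $m\ge 1$. Let $\alpha'(G)$ be the size of a maximum matching $M$ of $G$ and $l=n-2\alpha'(G)$ the number of $M$-unsaturated vertices of $G$. Then $s(G\circ P_m)=n\,s(P_m)+\alpha'(G)+l$ if $m\equiv 1\pmod 3$, and $s(G\circ P_m)=n\,s(P_m)$ otherwise.
   Context: A matching in a graph is a set of edges no two of which share a vertex; it is maximal if it is not properly contained in another matching, and maximum if it has the largest possible size. A vertex is $M$-unsaturated if no edge of $M$ is incident to it. The saturation number $s(G)$ is the minimum cardinality of a maximal matching of $G$. $P_m$ is the path on $m$ vertices; $s(P_m)=\lceil m/3\rceil$ if $m\equiv 2\pmod 3$ and $\lfloor m/3\rfloor$ otherwise. The corona $G_1\circ G_2$ is obtained by taking one copy of $G_1$ and $|V(G_1)|$ disjoint copies of $G_2$, and joining the $i$-th vertex of $G_1$ by an edge to every vertex of the $i$-th copy of $G_2$. *)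

theory Defs
  imports Main
begin

definition simple_graph :: "'a set \<Rightarrow> 'a set set \<Rightarrow> bool" where
  "simple_graph V E \<longleftrightarrow> finite V \<and>
     (\<forall>e\<in>E. \<exists>u v. u \<noteq> v \<and> u \<in> V \<and> v \<in> V \<and> e = {u, v})"

definition matching :: "'a set set \<Rightarrow> 'a set set \<Rightarrow> bool" where
  "matching E M \<longleftrightarrow> M \<subseteq> E \<and> (\<forall>e1\<in>M. \<forall>e2\<in>M. e1 \<noteq> e2 \<longrightarrow> e1 \<inter> e2 = {})"

definition maximal_matching :: "'a set set \<Rightarrow> 'a set set \<Rightarrow> bool" where
  "maximal_matching E M \<longleftrightarrow> matching E M \<and> (\<forall>M'. matching E M' \<and> M \<subseteq> M' \<longrightarrow> M' = M)"

definition saturation_number :: "'a set set \<Rightarrow> nat" where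
  "saturation_number E = Min (card ` {M. maximal_matching E M})"

definition matching_number :: "'a set set \<Rightarrow> nat" where
  "matching_number E = Max (card ` {M. matching E M})"

definition path_verts :: "nat \<Rightarrow> nat set" where
  "path_verts m = {0..<m}"

definition path_edges :: "nat \<Rightarrow> nat set set" where
  "path_edges m = {{i, Suc i} | i. Suc i < m}"

text \<open>Corona G1 o G2: vertex v of G1 is Inl v, vertex w of the v-th copy of G2 is Inr (v, w).\<close>
definition corona_verts :: "'a set \<Rightarrow> 'b set \<Rightarrow> ('a + 'a \<times> 'b) set" where
  "corona_verts V1 V2 = Inl ` V1 \<union> Inr ` (V1 \<times> V2)"

definition corona_edges ::
  "'a set \<Rightarrow> 'a set set \<Rightarrow> 'b set \<Rightarrow> 'b set set \<Rightarrow> ('a + 'a \<times> 'b) set set" where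
  "corona_edges V1 E1 V2 E2 =
     (image Inl) ` E1
   \<union> {(\<lambda>w. Inr (v, w)) ` e | v e. v \<in> V1 \<and> e \<in> E2}
   \<union> {{Inl v, Inr (v, w)} | v w. v \<in> V1 \<and> w \<in> V2}"

end

theory Submission
  imports Defs
begin


lemma matching_insert:
  assumes "matching E P" "e \<in> E" "\<forall>f\<in>P. f \<inter> e = {}"
  shows "matching E (insert e P)"
  using assms unfolding matching_def by (auto simp: Int_commute)

lemma maximal_meets:
  assumes "maximal_matching E P" "e \<in> E" "e \<noteq> {}"
  shows "e \<inter> \<Union>P \<noteq> {}"
proof (cases "e \<in> P")
  case True then show ?thesis using assms(3) by auto
next
  case False
  show ?thesis
  proof
    assume h: "e \<inter> \<Union>P = {}"
    have "matching E (insert e P)"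
      using assms(1) assms(2) h by (intro matching_insert) (auto simp: maximal_matching_def)
    then have "insert e P = P" using assms(1) unfolding maximal_matching_def by blast
    then show False using False by auto
  qed
qed

lemma dom_maximal:
  assumes "matching E P" "\<forall>e\<in>E. e \<inter> \<Union>P \<noteq> {}"
  shows "maximal_matching E P"
  unfolding maximal_matching_def
proof (intro conjI assms(1) allI impI)
  fix M' assume h: "matching E M' \<and> P \<subseteq> M'"
  show "M' = P"
  proof (rule ccontr)
    assume "M' \<noteq> P"
    then obtain e where e: "e \<in> M'" "e \<notin> P" using h by blast
    then have "e \<in> E" using h by (auto simp: matching_def)
    then obtain f x where f: "f \<in> P" "x \<in> e" "x \<in> f" using assms(2) by blast
    have "f \<in> M'" using f h by auto
    moreover have "e \<noteq> f" using e f by auto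
    ultimately have "e \<inter> f = {}" using h e unfolding matching_def by blast
    then show False using f by auto
  qed
qed

lemma finite_matchings: "finite E \<Longrightarrow> finite {M. matching E M}"
  by (rule finite_subset[of _ "Pow E"]) (auto simp: matching_def)

lemma matching_empty: "matching E {}" by (simp add: matching_def)

lemma ex_max_card_matching:
  assumes "finite E"
  shows "\<exists>N. matching E N \<and> card N = matching_number E"
proof -
  have "finite (card ` {M. matching E M})" using finite_matchings[OF assms] by simp
  moreover have "card ` {M. matching E M} \<noteq> {}" using matching_empty by blast
  ultimately have "matching_number E \<in> card ` {M. matching E M}"
    unfolding matching_number_def by (rule Max_in)
  then show ?thesis by auto
qed

lemma matching_le_number:
  assumes "finite E" "matching E N"
  shows "card N \<le> matching_number E"
  unfolding matching_number_def
  using finite_matchings[OF assms(1)] assms(2) by (intro Max_ge) auto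

lemma matching_finite: "finite E \<Longrightarrow> matching E N \<Longrightarrow> finite N"
  by (auto simp: matching_def intro: finite_subset)

lemma maximum_is_maximal:
  assumes "finite E" "matching E N" "card N = matching_number E"
  shows "maximal_matching E N"
  unfolding maximal_matching_def
proof (intro conjI assms(2) allI impI)
  fix M' assume h: "matching E M' \<and> N \<subseteq> M'"
  have "card M' \<le> card N" using matching_le_number[OF assms(1)] h assms(3) by auto
  moreover have "finite M'" using h matching_finite[OF assms(1)] by auto
  ultimately show "M' = N" using h card_subset_eq[of M' N] card_mono[of M' N] by (metis card_mono le_antisym)
qed

lemma ex_maximal:
  assumes "finite E" shows "\<exists>N. maximal_matching E N"
  using ex_max_card_matching[OF assms] maximum_is_maximal[OF assms] by blast

lemma finite_maximals: "finite E \<Longrightarrow> finite {M. maximal_matching E M}"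
  by (rule finite_subset[OF _ finite_matchings]) (auto simp: maximal_matching_def)

lemma sat_le:
  assumes "finite E" "maximal_matching E P"
  shows "saturation_number E \<le> card P"
  unfolding saturation_number_def
  using finite_maximals[OF assms(1)] assms(2) by (intro Min_le) auto

lemma sat_ex:
  assumes "finite E"
  shows "\<exists>P. maximal_matching E P \<and> card P = saturation_number E"
proof -
  have "finite (card ` {M. maximal_matching E M})" using finite_maximals[OF assms] by simp
  moreover have "card ` {M. maximal_matching E M} \<noteq> {}" using ex_maximal[OF assms] by blast
  ultimately have "saturation_number E \<in> card ` {M. maximal_matching E M}"
    unfolding saturation_number_def by (rule Min_in)
  then show ?thesis by auto
qed

lemma sat_eqI:
  assumes "finite E" "maximal_matching E P" "card P \<le> t" "\<And>M. maximal_matching E M \<Longrightarrow> t \<le> card M"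
  shows "saturation_number E = t"
  using sat_le[OF assms(1,2)] sat_ex[OF assms(1)] assms(3,4) by (metis le_antisym order.trans)

lemma path_edges_alt: "path_edges m = (\<lambda>i. {i, Suc i}) ` {i. Suc i < m}"
  by (auto simp: path_edges_def)

lemma finite_path_edges: "finite (path_edges m)"
  unfolding path_edges_alt by (rule finite_imageI) (rule finite_subset[of _ "{..<m}"], auto)

lemma mem_path_edges: "e \<in> path_edges m \<longleftrightarrow> (\<exists>i. Suc i < m \<and> e = {i, Suc i})"
  by (auto simp: path_edges_def)

lemma card_Union_pe:
  assumes "P \<subseteq> path_edges m"
  shows "card (\<Union>P) \<le> 2 * card P"
proof -
  have "finite P" using assms finite_path_edges finite_subset by blast
  have "card (\<Union>P) \<le> sum card P" by (rule card_Union_le_sum_card)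
  also have "\<dots> = sum (\<lambda>_. 2) P"
  proof (rule sum.cong)
    fix x assume "x \<in> P"
    then obtain i where "x = {i, Suc i}" using assms mem_path_edges[of x m] by blast
    then show "card x = 2" by simp
  qed simp
  also have "\<dots> = 2 * card P" by simp
  finally show ?thesis .
qed

lemma path_LB:
  assumes P: "P \<subseteq> path_edges m" and S: "finite S"
    and dom: "\<forall>e\<in>path_edges m. e \<inter> (\<Union>P \<union> S) \<noteq> {}"
  shows "m \<le> 3 * card P + 2 * card S + 1"
proof -
  have fP: "finite P" using P finite_path_edges finite_subset by blast
  define L where "L = {y. {y, Suc y} \<in> P}"
  define U where "U = {x. x < m \<and> x \<notin> \<Union>P \<and> x \<notin> S}"
  have fU: "finite U" unfolding U_def by auto
  have injL: "inj_on (\<lambda>y. {y, Suc y}) L" by (auto simp: inj_on_def doubleton_eq_iff)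
  have "(\<lambda>y. {y, Suc y}) ` L \<subseteq> P" unfolding L_def by auto
  then have cL: "card L \<le> card P"
    using card_image[OF injL] card_mono[OF fP] by metis
  have fL: "finite L" using injL fP \<open>(\<lambda>y. {y, Suc y}) ` L \<subseteq> P\<close>
    by (meson finite_imageD finite_subset)
  have sub: "Suc ` (U - {m - 1}) \<subseteq> L \<union> S"
  proof
    fix z assume "z \<in> Suc ` (U - {m - 1})"
    then obtain x where x: "z = Suc x" "x < m" "x \<noteq> m - 1" "x \<notin> \<Union>P" "x \<notin> S"
      unfolding U_def by auto
    have "Suc x < m" using x by linarith
    then have "{x, Suc x} \<in> path_edges m" by (auto simp: mem_path_edges)
    then have "{x, Suc x} \<inter> (\<Union>P \<union> S) \<noteq> {}" using dom by blast
    then have "Suc x \<in> \<Union>P \<or> Suc x \<in> S" using x by auto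
    then show "z \<in> L \<union> S"
    proof
      assume "Suc x \<in> \<Union>P"
      then obtain f where f: "f \<in> P" "Suc x \<in> f" by auto
      then obtain i where i: "f = {i, Suc i}" using P mem_path_edges[of f m] by blast
      show ?thesis
      proof (cases "Suc x = i")
        case True then show ?thesis using f i x unfolding L_def by auto
      next
        case False then have "x = i" using f i by auto
        then show ?thesis using f i x by auto
      qed
    qed (use x in auto)
  qed
  have "card (U - {m - 1}) = card (Suc ` (U - {m - 1}))" by (simp add: card_image)
  also have "\<dots> \<le> card (L \<union> S)" using sub fL S by (intro card_mono) auto
  also have "\<dots> \<le> card L + card S" by (rule card_Un_le)
  finally have cU1: "card (U - {m - 1}) \<le> card P + card S" using cL by linarith
  have "card U \<le> card (insert (m - 1) (U - {m - 1}))" using fU by (intro card_mono) auto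
  also have "\<dots> \<le> card (U - {m - 1}) + 1"
    using card_insert_le_m1[of "card (U - {m - 1}) + 1" "U - {m - 1}" "m - 1"] by simp
  finally have cU: "card U \<le> card P + card S + 1" using cU1 by linarith
  have fUP: "finite (\<Union>P)"
  proof (rule finite_Union[OF fP])
    fix x assume "x \<in> P"
    then obtain i where "x = {i, Suc i}" using P mem_path_edges[of x m] by blast
    then show "finite x" by simp
  qed
  have "{0..<m} \<subseteq> \<Union>P \<union> S \<union> U" unfolding U_def by auto
  then have "m \<le> card (\<Union>P \<union> S \<union> U)" using fUP S fU
    by (metis card_atLeastLessThan card_mono diff_zero finite_UnI)
  also have "\<dots> \<le> card (\<Union>P) + card S + card U"
    by (metis add_le_mono1 card_Un_le order.trans)
  finally show ?thesis using card_Union_pe[OF P] cU by linarith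
qed




lemma pe_nonempty: "e \<in> path_edges m \<Longrightarrow> e \<noteq> {}"
  by (auto simp: mem_path_edges)

lemma s_lb: "m \<le> 3 * saturation_number (path_edges m) + 1"
proof -
  obtain P where P: "maximal_matching (path_edges m) P" "card P = saturation_number (path_edges m)"
    using sat_ex[OF finite_path_edges] by blast
  have sub: "P \<subseteq> path_edges m" using P by (auto simp: maximal_matching_def matching_def)
  have "\<forall>e\<in>path_edges m. e \<inter> (\<Union>P \<union> {}) \<noteq> {}"
    using maximal_meets[OF P(1)] pe_nonempty by auto
  from path_LB[OF sub _ this] P(2) show ?thesis by simp
qed

lemma config_le:
  assumes "matching (path_edges m) P" "j \<notin> \<Union>P"
    and dom: "\<forall>e\<in>path_edges m. e \<inter> (\<Union>P \<union> {j}) \<noteq> {}"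
  shows "saturation_number (path_edges m) \<le> card P + 1"
proof (cases "\<forall>e\<in>path_edges m. e \<inter> \<Union>P \<noteq> {}")
  case True
  have "maximal_matching (path_edges m) P" by (rule dom_maximal[OF assms(1) True])
  then show ?thesis using sat_le[OF finite_path_edges] by fastforce
next
  case False
  then obtain e where e: "e \<in> path_edges m" "e \<inter> \<Union>P = {}" by blast
  have fP: "finite P" using assms(1) matching_finite[OF finite_path_edges] by blast
  have ne: "e \<notin> P" using e pe_nonempty[OF e(1)] by auto
  have "j \<in> e" using dom e by blast
  have m: "matching (path_edges m) (insert e P)"
    using e assms(1) by (intro matching_insert) auto
  have "\<forall>e'\<in>path_edges m. e' \<inter> \<Union>(insert e P) \<noteq> {}"
    using dom \<open>j \<in> e\<close> by blast
  then have "maximal_matching (path_edges m) (insert e P)" using m dom_maximal by blast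
  then have "saturation_number (path_edges m) \<le> card (insert e P)"
    using sat_le[OF finite_path_edges] by blast
  then show ?thesis using fP ne by simp
qed

definition M0 :: "nat \<Rightarrow> nat set set" where
  "M0 m = (\<lambda>k. {3*k+1, 3*k+2}) ` {k. 3*k+2 < m}"

lemma M0_Union: "x \<in> \<Union>(M0 m) \<longleftrightarrow> (\<exists>k. 3*k+2 < m \<and> (x = 3*k+1 \<or> x = 3*k+2))"
  by (auto simp: M0_def)

lemma M0_matching: "matching (path_edges m) (M0 m)"
  unfolding matching_def
proof (intro conjI ballI impI)
  show "M0 m \<subseteq> path_edges m"
    by (auto simp: M0_def mem_path_edges)
  fix e1 e2 assume "e1 \<in> M0 m" "e2 \<in> M0 m" "e1 \<noteq> e2"
  then obtain a b where "e1 = {3*a+1, 3*a+2}" "e2 = {3*b+1, 3*b+2}" "a \<noteq> b" by (auto simp: M0_def)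
  then show "e1 \<inter> e2 = {}" by auto
qed

lemma M0_card: "card (M0 m) \<le> m div 3"
proof -
  have "{k. 3*k+2 < m} = {..<m div 3}" by (auto; presburger)
  then show ?thesis unfolding M0_def using card_image_le[of "{k. 3*k+2 < m}"] by simp
qed

lemma M0_dom:
  assumes "m mod 3 = 1"
  shows "\<forall>e\<in>path_edges m. e \<inter> \<Union>(M0 m) \<noteq> {}"
proof
  fix e assume "e \<in> path_edges m"
  then obtain i where i: "Suc i < m" "e = {i, Suc i}" by (auto simp: mem_path_edges)
  have "(\<exists>k. 3*k+2 < m \<and> (i = 3*k+1 \<or> i = 3*k+2)) \<or> (\<exists>k. 3*k+2 < m \<and> (Suc i = 3*k+1 \<or> Suc i = 3*k+2))"
    using i(1) assms by presburger
  then show "e \<inter> \<Union>(M0 m) \<noteq> {}" unfolding M0_Union[symmetric] using i by blast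
qed

lemma s_m1:
  assumes "m mod 3 = 1"
  shows "3 * saturation_number (path_edges m) + 1 = m"
proof -
  have "maximal_matching (path_edges m) (M0 m)" using M0_matching M0_dom[OF assms] by (rule dom_maximal)
  then have "saturation_number (path_edges m) \<le> m div 3"
    using sat_le[OF finite_path_edges] M0_card order.trans by blast
  then show ?thesis using s_lb[of m] assms by presburger
qed

definition M1 :: "nat \<Rightarrow> nat set set" where
  "M1 m = (\<lambda>k. {3*k+3, 3*k+4}) ` {k. 3*k+4 < m}"

lemma M1_Union: "x \<in> \<Union>(M1 m) \<longleftrightarrow> (\<exists>k. 3*k+4 < m \<and> (x = 3*k+3 \<or> x = 3*k+4))"
  by (auto simp: M1_def)

lemma M1_matching: "matching (path_edges m) (M1 m)"
  unfolding matching_def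
proof (intro conjI ballI impI)
  show "M1 m \<subseteq> path_edges m"
  proof
    fix e assume "e \<in> M1 m"
    then obtain k where "e = {3*k+3, 3*k+4}" "3*k+4 < m" by (auto simp: M1_def)
    then show "e \<in> path_edges m" unfolding mem_path_edges
      by (intro exI[of _ "3*k+3"]) auto
  qed
  fix e1 e2 assume "e1 \<in> M1 m" "e2 \<in> M1 m" "e1 \<noteq> e2"
  then obtain a b where "e1 = {3*a+3, 3*a+4}" "e2 = {3*b+3, 3*b+4}" "a \<noteq> b" by (auto simp: M1_def)
  then show "e1 \<inter> e2 = {}" by auto
qed

lemma M1_card: "card (M1 m) \<le> (m - 2) div 3"
proof -
  have "{k. 3*k+4 < m} = {..<(m - 2) div 3}" by (auto; presburger)
  then show ?thesis unfolding M1_def using card_image_le[of "{k. 3*k+4 < m}"] by simp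
qed

lemma M1_dom:
  assumes "m mod 3 \<noteq> 1"
  shows "\<forall>e\<in>path_edges m. e \<inter> (\<Union>(M1 m) \<union> {1}) \<noteq> {}"
proof
  fix e assume "e \<in> path_edges m"
  then obtain i where i: "Suc i < m" "e = {i, Suc i}" by (auto simp: mem_path_edges)
  have "i = 1 \<or> Suc i = 1 \<or> (\<exists>k. 3*k+4 < m \<and> (i = 3*k+3 \<or> i = 3*k+4)) \<or> (\<exists>k. 3*k+4 < m \<and> (Suc i = 3*k+3 \<or> Suc i = 3*k+4))"
    using i(1) assms by presburger
  then show "e \<inter> (\<Union>(M1 m) \<union> {1}) \<noteq> {}" unfolding M1_Union[symmetric] using i by blast
qed

lemma config_ex:
  assumes "m \<ge> 1"
  shows "\<exists>j P. j < m \<and> matching (path_edges m) P \<and> j \<notin> \<Union>P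
     \<and> (\<forall>e\<in>path_edges m. e \<inter> (\<Union>P \<union> {j}) \<noteq> {})
     \<and> card P + 1 \<le> saturation_number (path_edges m) + (if m mod 3 = 1 then 1 else 0)"
proof (cases "m mod 3 = 1")
  case True
  have a: "0 \<notin> \<Union>(M0 m)" by (auto simp: M0_def)
  have b: "\<forall>e\<in>path_edges m. e \<inter> (\<Union>(M0 m) \<union> {0}) \<noteq> {}" using M0_dom[OF True] by blast
  have c: "card (M0 m) + 1 \<le> saturation_number (path_edges m) + (if m mod 3 = 1 then 1 else 0)"
    using M0_card[of m] s_m1[OF True] True by presburger
  show ?thesis using assms M0_matching a b c by (intro exI[of _ 0] exI[of _ "M0 m"]) simp
next
  case False
  have "m \<ge> 2" using assms False by presburger
  have a: "1 \<notin> \<Union>(M1 m)" by (auto simp: M1_def)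
  have c: "card (M1 m) + 1 \<le> saturation_number (path_edges m) + (if m mod 3 = 1 then 1 else 0)"
  proof -
    have "(m - 2) div 3 + 1 \<le> saturation_number (path_edges m)"
      using s_lb[of m] False \<open>m \<ge> 2\<close> by presburger
    then show ?thesis using M1_card[of m] False by simp
  qed
  show ?thesis using \<open>m \<ge> 2\<close> M1_matching a M1_dom[OF False] c
    by (intro exI[of _ 1] exI[of _ "M1 m"]) simp
qed




definition cp :: "'a \<Rightarrow> nat set \<Rightarrow> ('a + 'a \<times> nat) set" where
  "cp v e = (\<lambda>w. Inr (v, w)) ` e"

definition sp :: "'a \<Rightarrow> nat \<Rightarrow> ('a + 'a \<times> nat) set" where
  "sp v w = {Inl v, Inr (v, w)}"

lemma mem_cp: "x \<in> cp v e \<longleftrightarrow> (\<exists>w\<in>e. x = Inr (v, w))" by (auto simp: cp_def)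
lemma Inr_cp[simp]: "Inr (v', w) \<in> cp v e \<longleftrightarrow> v' = v \<and> w \<in> e" by (auto simp: cp_def)
lemma Inl_cp[simp]: "Inl u \<notin> cp v e" by (auto simp: cp_def)
lemma Inl_sp[simp]: "Inl u \<in> sp v w \<longleftrightarrow> u = v" by (auto simp: sp_def)
lemma Inr_sp[simp]: "Inr p \<in> sp v w \<longleftrightarrow> p = (v, w)" by (auto simp: sp_def)
lemma Inr_Inl_img[simp]: "Inr p \<notin> Inl ` g" by auto
lemma cp_inj: "cp v e = cp v e' \<longleftrightarrow> e = e'"
  unfolding cp_def by (rule inj_image_eq_iff) (auto simp: inj_def)
lemma sp_inj: "sp v w = sp v' w' \<longleftrightarrow> v = v' \<and> w = w'"
  by (auto simp: sp_def doubleton_eq_iff)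
lemma cp_ne_sp: "cp v e \<noteq> sp v' w" using Inl_cp Inl_sp by metis
lemma Inl_img_ne_cp: "e \<noteq> {} \<Longrightarrow> Inl ` g \<noteq> cp v e"
  by (metis Inr_Inl_img all_not_in_conv mem_cp)
lemma Inl_img_ne_sp: "Inl ` g \<noteq> sp v w"
  by (metis Inr_Inl_img Inr_sp)
lemma Inl_img_inj: "Inl ` g = Inl ` g' \<longleftrightarrow> g = g'"
  by (rule inj_image_eq_iff) (auto simp: inj_def)

lemma matchingD: "matching E M \<Longrightarrow> f1 \<in> M \<Longrightarrow> f2 \<in> M \<Longrightarrow> x \<in> f1 \<Longrightarrow> x \<in> f2 \<Longrightarrow> f1 = f2"
  unfolding matching_def by blast

locale cor =
  fixes V :: "'a set" and E :: "'a set set" and m :: nat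
  assumes G: "simple_graph V E" and m1: "m \<ge> 1"
begin

abbreviation "CE \<equiv> corona_edges V E (path_verts m) (path_edges m)"
abbreviation "sP \<equiv> saturation_number (path_edges m)"

lemma finV: "finite V" using G by (simp add: simple_graph_def)

lemma E_edge: "g \<in> E \<Longrightarrow> \<exists>u v. u \<noteq> v \<and> u \<in> V \<and> v \<in> V \<and> g = {u, v}"
  using G by (simp add: simple_graph_def)

lemma E_sub: "g \<in> E \<Longrightarrow> g \<subseteq> V" using E_edge by blast

lemma finE: "finite E"
  by (rule finite_subset[of _ "Pow V"]) (use E_sub finV in auto)

lemma E_card: "g \<in> E \<Longrightarrow> card g = 2" using E_edge by fastforce

lemma mem_CE: "f \<in> CE \<longleftrightarrow> (\<exists>g\<in>E. f = Inl ` g) \<or> (\<exists>v\<in>V. \<exists>e\<in>path_edges m. f = cp v e)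
   \<or> (\<exists>v\<in>V. \<exists>w<m. f = sp v w)"
  unfolding corona_edges_def cp_def sp_def path_verts_def by auto

lemma finCE: "finite CE"
proof (rule finite_subset[of _ "Pow (Inl ` V \<union> Inr ` (V \<times> {..<m}))"])
  show "CE \<subseteq> Pow (Inl ` V \<union> Inr ` (V \<times> {..<m}))"
  proof
    fix f assume "f \<in> CE"
    then consider (a) g where "g \<in> E" "f = Inl ` g"
      | (b) v e where "v \<in> V" "e \<in> path_edges m" "f = cp v e"
      | (c) v w where "v \<in> V" "w < m" "f = sp v w"
      unfolding mem_CE by blast
    then show "f \<in> Pow (Inl ` V \<union> Inr ` (V \<times> {..<m}))"
    proof cases
      case a then show ?thesis using E_sub by auto
    next
      case b then show ?thesis by (auto simp: cp_def mem_path_edges)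
    next
      case c then show ?thesis by (auto simp: sp_def)
    qed
  qed
  show "finite (Pow (Inl ` V \<union> Inr ` (V \<times> {..<m})))" using finV by simp
qed

lemma matching_Union_card:
  assumes "matching E N"
  shows "card (\<Union>N) = 2 * card N"
proof -
  have "card (\<Union>N) = sum card N"
  proof (rule card_Union_disjoint)
    show "pairwise disjnt N" using assms unfolding matching_def pairwise_def disjnt_def by blast
    fix A assume "A \<in> N" then show "finite A" using assms E_edge unfolding matching_def by fastforce
  qed
  also have "\<dots> = sum (\<lambda>_. 2) N" using assms E_card unfolding matching_def by (intro sum.cong) auto
  finally show ?thesis by simp
qed

lemma alpha_le: "2 * matching_number E \<le> card V"
proof -
  obtain N where N: "matching E N" "card N = matching_number E" using ex_max_card_matching[OF finE] by blast
  have "\<Union>N \<subseteq> V" using N(1) E_sub unfolding matching_def by blast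
  then have "card (\<Union>N) \<le> card V" using finV card_mono by blast
  then show ?thesis using matching_Union_card[OF N(1)] N(2) by simp
qed

end



context cor begin

definition "PP M v = {e \<in> path_edges m. cp v e \<in> M}"
definition "JJ M v = {w. w < m \<and> sp v w \<in> M}"
definition "MG M = {g \<in> E. Inl ` g \<in> M}"

lemma MG_matching:
  assumes "matching CE M" shows "matching E (MG M)"
  unfolding matching_def
proof (intro conjI ballI impI)
  show "MG M \<subseteq> E" by (auto simp: MG_def)
  fix g1 g2 assume h: "g1 \<in> MG M" "g2 \<in> MG M" "g1 \<noteq> g2"
  show "g1 \<inter> g2 = {}"
  proof (rule ccontr)
    assume "g1 \<inter> g2 \<noteq> {}"
    then obtain x where "x \<in> g1" "x \<in> g2" by blast
    then have "Inl ` g1 = Inl ` g2"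
      using matchingD[OF assms, of "Inl ` g1" "Inl ` g2" "Inl x"] h by (auto simp: MG_def)
    then show False using h(3) by (simp add: inj_image_eq_iff[OF inj_Inl])
  qed
qed

lemma PP_matching:
  assumes "matching CE M" shows "matching (path_edges m) (PP M v)"
  unfolding matching_def
proof (intro conjI ballI impI)
  show "PP M v \<subseteq> path_edges m" by (auto simp: PP_def)
  fix g1 g2 assume h: "g1 \<in> PP M v" "g2 \<in> PP M v" "g1 \<noteq> g2"
  show "g1 \<inter> g2 = {}"
  proof (rule ccontr)
    assume "g1 \<inter> g2 \<noteq> {}"
    then obtain x where "x \<in> g1" "x \<in> g2" by blast
    then have "cp v g1 = cp v g2"
      using matchingD[OF assms, of "cp v g1" "cp v g2" "Inr (v, x)"] h by (auto simp: PP_def)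
    then show False using h(3) by (simp add: cp_inj)
  qed
qed

lemma JJ_W:
  assumes "matching CE M" "v \<in> \<Union>(MG M)" shows "JJ M v = {}"
proof (rule ccontr)
  assume "JJ M v \<noteq> {}"
  then obtain w where w: "sp v w \<in> M" by (auto simp: JJ_def)
  obtain g where g: "g \<in> MG M" "v \<in> g" using assms(2) by blast
  have "Inl ` g = sp v w" using matchingD[OF assms(1), of "Inl ` g" "sp v w" "Inl v"] g w
    by (auto simp: MG_def)
  then show False by (simp add: Inl_img_ne_sp)
qed

lemma JJ_single:
  assumes "matching CE M" "w \<in> JJ M v" "w' \<in> JJ M v" shows "w = w'"
  using matchingD[OF assms(1), of "sp v w" "sp v w'" "Inl v"] assms(2,3)
  by (auto simp: JJ_def sp_inj)

lemma JJ_PP: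
  assumes "matching CE M" "w \<in> JJ M v" shows "w \<notin> \<Union>(PP M v)"
proof
  assume "w \<in> \<Union>(PP M v)"
  then obtain e where e: "e \<in> PP M v" "w \<in> e" by blast
  have "cp v e = sp v w" using matchingD[OF assms(1), of "cp v e" "sp v w" "Inr (v, w)"] e assms(2)
    by (auto simp: PP_def JJ_def)
  then show False by (simp add: cp_ne_sp)
qed

lemma dom_PJ:
  assumes "maximal_matching CE M" "v \<in> V" "e \<in> path_edges m"
  shows "e \<inter> (\<Union>(PP M v) \<union> JJ M v) \<noteq> {}"
proof -
  have inC: "cp v e \<in> CE" using assms(2,3) mem_CE by blast
  have "cp v e \<noteq> {}" using pe_nonempty[OF assms(3)] by (auto simp: cp_def)
  then have "cp v e \<inter> \<Union>M \<noteq> {}" using maximal_meets[OF assms(1) inC] by blast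
  then obtain f x where f: "f \<in> M" "x \<in> e" "Inr (v, x) \<in> f" by (auto simp: mem_cp)
  have "f \<in> CE" using f(1) assms(1) by (auto simp: maximal_matching_def matching_def)
  then consider (a) g where "g \<in> E" "f = Inl ` g"
      | (b) v' e' where "v' \<in> V" "e' \<in> path_edges m" "f = cp v' e'"
      | (c) v' w where "v' \<in> V" "w < m" "f = sp v' w"
      unfolding mem_CE by blast
  then show ?thesis
  proof cases
    case a then show ?thesis using f by auto
  next
    case b then show ?thesis using f by (auto simp: PP_def)
  next
    case c then show ?thesis using f by (auto simp: JJ_def)
  qed
qed

lemma perfect_case:
  assumes "maximal_matching CE M" "v \<in> V" "v \<notin> \<Union>(MG M)" "JJ M v = {}" "w < m"
  shows "w \<in> \<Union>(PP M v)"
proof -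
  have inC: "sp v w \<in> CE" using assms(2,5) mem_CE by blast
  have "sp v w \<noteq> {}" by (auto simp: sp_def)
  then have "sp v w \<inter> \<Union>M \<noteq> {}" using maximal_meets[OF assms(1) inC] by blast
  then obtain f x where f: "f \<in> M" "x \<in> sp v w" "x \<in> f" by auto
  have "f \<in> CE" using f(1) assms(1) by (auto simp: maximal_matching_def matching_def)
  then consider (a) g where "g \<in> E" "f = Inl ` g"
      | (b) v' e' where "v' \<in> V" "e' \<in> path_edges m" "f = cp v' e'"
      | (c) v' w' where "v' \<in> V" "w' < m" "f = sp v' w'"
      unfolding mem_CE by blast
  then show ?thesis
  proof cases
    case a
    then have "x = Inl v" using f by (auto simp: sp_def)
    then have "v \<in> g" using a f by auto
    then show ?thesis using a f assms(3) by (auto simp: MG_def)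
  next
    case b then show ?thesis using f by (auto simp: PP_def sp_def)
  next
    case c then show ?thesis using f assms(4) by (auto simp: JJ_def sp_def)
  qed
qed

definition "dl = (if m mod 3 = 1 then 1 else 0::nat)"

lemma finite_PP: "finite (PP M v)"
  by (rule finite_subset[OF _ finite_path_edges]) (auto simp: PP_def)

lemma finite_Union_PP: "finite (\<Union>(PP M v))"
proof (rule finite_Union[OF finite_PP])
  fix x assume "x \<in> PP M v"
  then obtain i where "x = {i, Suc i}" using mem_path_edges[of x m] by (auto simp: PP_def)
  then show "finite x" by simp
qed

lemma vertex_bound:
  assumes max: "maximal_matching CE M" and v: "v \<in> V"
  shows "sP + (if v \<in> \<Union>(MG M) then 0 else dl) \<le> card (PP M v) + card (JJ M v)"
proof -
  have mat: "matching CE M" using max by (simp add: maximal_matching_def)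
  note Pm = PP_matching[OF mat, of v]
  have dom: "\<forall>e\<in>path_edges m. e \<inter> (\<Union>(PP M v) \<union> JJ M v) \<noteq> {}" using dom_PJ[OF max v] by blast
  show ?thesis
  proof (cases "v \<in> \<Union>(MG M)")
    case True
    then have "JJ M v = {}" using JJ_W[OF mat] by blast
    then have "maximal_matching (path_edges m) (PP M v)" using dom_maximal[OF Pm] dom by simp
    then show ?thesis using sat_le[OF finite_path_edges] True by fastforce
  next
    case False
    show ?thesis
    proof (cases "JJ M v = {}")
      case True
      have all: "{0..<m} \<subseteq> \<Union>(PP M v)" using perfect_case[OF max v False True] by auto
      have "\<forall>e\<in>path_edges m. e \<inter> \<Union>(PP M v) \<noteq> {}"
      proof
        fix e assume "e \<in> path_edges m"
        then obtain i where "Suc i < m" "e = {i, Suc i}" by (auto simp: mem_path_edges)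
        then show "e \<inter> \<Union>(PP M v) \<noteq> {}" using all by auto
      qed
      then have "maximal_matching (path_edges m) (PP M v)" using dom_maximal[OF Pm] by simp
      then have s1: "sP \<le> card (PP M v)" using sat_le[OF finite_path_edges] by blast
      have "m \<le> card (\<Union>(PP M v))" using card_mono[OF finite_Union_PP all] by simp
      also have "\<dots> \<le> 2 * card (PP M v)" by (rule card_Union_pe) (auto simp: PP_def)
      finally have "m \<le> 2 * card (PP M v)" .
      then have "sP + dl \<le> card (PP M v)"
        using s1 s_m1[of m] unfolding dl_def by (cases "m mod 3 = 1") auto
      then show ?thesis using False True by simp
    next
      case nJ: False
      then obtain j where j: "j \<in> JJ M v" by blast
      then have J: "JJ M v = {j}" using JJ_single[OF mat] by blast
      have jn: "j \<notin> \<Union>(PP M v)" using JJ_PP[OF mat j] .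
      have s1: "sP \<le> card (PP M v) + 1" using config_le[OF Pm jn] dom J by simp
      have "m \<le> 3 * card (PP M v) + 2 * card {j} + 1"
        using path_LB[of "PP M v" m "{j}"] dom J by (auto simp: PP_def)
      then have "m \<le> 3 * card (PP M v) + 3" by simp
      then have "sP + dl \<le> card (PP M v) + 1"
        using s1 s_m1[of m] unfolding dl_def by (cases "m mod 3 = 1") auto
      then show ?thesis using False J by simp
    qed
  qed
qed

end



context cor begin

lemma CE_sub: "maximal_matching CE M \<Longrightarrow> M \<subseteq> CE"
  by (auto simp: maximal_matching_def matching_def)

lemma LB_total:
  assumes max: "maximal_matching CE M"
  shows "card (MG M) + card V * sP + dl * card (V - \<Union>(MG M)) \<le> card M"
proof -
  have mat: "matching CE M" using max by (simp add: maximal_matching_def)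
  have finM: "finite M" using CE_sub[OF max] finCE finite_subset by blast
  define A :: "('a + 'a \<times> nat) set set" where "A = (image Inl) ` (MG M)"
  define B where "B v = cp v ` PP M v \<union> sp v ` JJ M v" for v
  have finMG: "finite (MG M)" using finE by (rule finite_subset[rotated]) (auto simp: MG_def)
  have finB: "finite (B v)" for v
    using finite_PP[of M v] by (auto simp: B_def JJ_def)
  have sub: "A \<union> (\<Union>v\<in>V. B v) \<subseteq> M" by (auto simp: A_def B_def MG_def PP_def JJ_def)
  have Bform: "\<exists>w. Inr (v, w) \<in> f" "\<And>p. Inr p \<in> f \<Longrightarrow> fst p = v" if "f \<in> B v" for f v
  proof -
    from that consider (a) e where "e \<in> PP M v" "f = cp v e" | (b) w where "f = sp v w"
      by (auto simp: B_def)
    then show "\<exists>w. Inr (v, w) \<in> f"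
    proof cases
      case a
      then obtain w where "w \<in> e" using pe_nonempty[of e m] by (auto simp: PP_def)
      then show ?thesis using a by auto
    next
      case b then show ?thesis by auto
    qed
    fix p assume "Inr p \<in> f"
    from that consider (a) e where "e \<in> PP M v" "f = cp v e" | (b) w where "f = sp v w"
      by (auto simp: B_def)
    then show "fst p = v"
    proof cases
      case a then show ?thesis using \<open>Inr p \<in> f\<close> by (cases p) auto
    next
      case b then show ?thesis using \<open>Inr p \<in> f\<close> by (cases p) auto
    qed
  qed
  have disjAB: "A \<inter> (\<Union>v\<in>V. B v) = {}"
  proof (rule ccontr)
    assume "A \<inter> (\<Union>v\<in>V. B v) \<noteq> {}"
    then obtain f v where f: "f \<in> A" "f \<in> B v" by blast
    obtain w where "Inr (v, w) \<in> f" using Bform(1)[OF f(2)] by blast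
    then show False using f(1) by (auto simp: A_def)
  qed
  have cardA: "card A = card (MG M)"
    unfolding A_def by (rule card_image) (simp add: inj_on_def inj_image_eq_iff[OF inj_Inl])
  have cardUB: "card (\<Union>v\<in>V. B v) = (\<Sum>v\<in>V. card (B v))"
  proof (rule card_UN_disjoint)
    show "finite V" by (rule finV)
    show "\<forall>i\<in>V. finite (B i)" using finB by blast
    show "\<forall>i\<in>V. \<forall>j\<in>V. i \<noteq> j \<longrightarrow> B i \<inter> B j = {}"
    proof (intro ballI impI)
      fix i j assume "i \<in> V" "j \<in> V" "i \<noteq> j"
      show "B i \<inter> B j = {}"
      proof (rule ccontr)
        assume "B i \<inter> B j \<noteq> {}"
        then obtain f where f: "f \<in> B i" "f \<in> B j" by blast
        obtain w where "Inr (i, w) \<in> f" using Bform(1)[OF f(1)] by blast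
        then have "fst (i, w) = j" using Bform(2)[OF f(2)] by blast
        then show False using \<open>i \<noteq> j\<close> by simp
      qed
    qed
  qed
  have cardB: "card (B v) = card (PP M v) + card (JJ M v)" for v
  proof -
    have "card (B v) = card (cp v ` PP M v) + card (sp v ` JJ M v)"
      unfolding B_def
      by (rule card_Un_disjoint) (use finite_PP[of M v] in \<open>auto simp: JJ_def cp_ne_sp\<close>)
    also have "card (cp v ` PP M v) = card (PP M v)"
      by (rule card_image) (simp add: inj_on_def cp_inj)
    also have "card (sp v ` JJ M v) = card (JJ M v)"
      by (rule card_image) (simp add: inj_on_def sp_inj)
    finally show ?thesis .
  qed
  let ?W = "\<Union>(MG M)"
  have "(\<Sum>v\<in>V. sP + (if v \<in> ?W then 0 else dl)) \<le> (\<Sum>v\<in>V. card (B v))"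
  proof (rule sum_mono)
    fix v assume "v \<in> V"
    from vertex_bound[OF max this] show "sP + (if v \<in> ?W then 0 else dl) \<le> card (B v)"
      unfolding cardB .
  qed
  moreover have "(\<Sum>v\<in>V. sP + (if v \<in> ?W then 0 else dl)) = card V * sP + dl * card (V - ?W)"
  proof -
    have "(\<Sum>v\<in>V. (if v \<in> ?W then 0 else dl)) = (\<Sum>v\<in>V - ?W. dl)"
      by (rule sum.mono_neutral_cong_right) (use finV in auto)
    then show ?thesis by (simp add: sum.distrib)
  qed
  ultimately have "card V * sP + dl * card (V - ?W) \<le> card (\<Union>v\<in>V. B v)" using cardUB by simp
  moreover have "card (A \<union> (\<Union>v\<in>V. B v)) = card A + card (\<Union>v\<in>V. B v)"
    by (rule card_Un_disjoint) (use finite_subset[OF sub finM] disjAB in auto)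
  moreover have "card (A \<union> (\<Union>v\<in>V. B v)) \<le> card M" by (rule card_mono[OF finM sub])
  ultimately show ?thesis using cardA by linarith
qed

lemma LB_final:
  assumes max: "maximal_matching CE M"
  shows "(if m mod 3 = 1 then card V * sP + matching_number E + (card V - 2 * matching_number E)
          else card V * sP) \<le> card M"
proof -
  have mat: "matching CE M" using max by (simp add: maximal_matching_def)
  let ?k = "card (MG M)"
  have MGm: "matching E (MG M)" by (rule MG_matching[OF mat])
  have k: "?k \<le> matching_number E" by (rule matching_le_number[OF finE MGm])
  have WV: "\<Union>(MG M) \<subseteq> V" using E_sub by (auto simp: MG_def)
  have cW: "card (\<Union>(MG M)) = 2 * ?k" by (rule matching_Union_card[OF MGm])
  have cVW: "card (V - \<Union>(MG M)) = card V - 2 * ?k"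
    using card_Diff_subset[OF finite_subset[OF WV finV] WV] cW by simp
  have cWle: "2 * ?k \<le> card V" using cW card_mono[OF finV WV] by simp
  note LB_total[OF max] alpha_le
  then show ?thesis using k cVW cWle unfolding dl_def by (cases "m mod 3 = 1") auto
qed

end



context cor begin

lemma UB:
  "\<exists>M. maximal_matching CE M \<and> card M \<le>
     (if m mod 3 = 1 then card V * sP + matching_number E + (card V - 2 * matching_number E)
      else card V * sP)"
proof -
  obtain N where N: "matching E N" "card N = (if m mod 3 = 1 then matching_number E else 0)"
  proof (cases "m mod 3 = 1")
    case True
    obtain N0 where "matching E N0" "card N0 = matching_number E" using ex_max_card_matching[OF finE] by blast
    then show ?thesis using that[of N0] True by simp
  next
    case False then show ?thesis using that[of "{}"] matching_empty[of E] by simp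
  qed
  define W where "W = \<Union>N"
  have WV: "W \<subseteq> V" using N(1) E_sub unfolding W_def matching_def by blast
  have cW: "card W = 2 * card N" unfolding W_def by (rule matching_Union_card[OF N(1)])
  obtain Q where Q: "maximal_matching (path_edges m) Q" "card Q = sP"
    using sat_ex[OF finite_path_edges] by blast
  obtain j P where jP: "j < m" "matching (path_edges m) P" "j \<notin> \<Union>P"
     "\<forall>e\<in>path_edges m. e \<inter> (\<Union>P \<union> {j}) \<noteq> {}" "card P + 1 \<le> sP + dl"
    using config_ex[OF m1] unfolding dl_def by blast
  have QE: "Q \<subseteq> path_edges m" and Qm: "matching (path_edges m) Q"
    using Q(1) by (auto simp: maximal_matching_def matching_def)
  have PE: "P \<subseteq> path_edges m" using jP(2) by (auto simp: matching_def)
  have NE: "N \<subseteq> E" using N(1) by (auto simp: matching_def)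
  define Ms :: "('a + 'a \<times> nat) set set" where
    "Ms = (image Inl) ` N \<union> (\<Union>v\<in>W. cp v ` Q) \<union> (\<Union>v\<in>V - W. insert (sp v j) (cp v ` P))"
  have memMs: "f \<in> Ms \<longleftrightarrow> (\<exists>g\<in>N. f = Inl ` g) \<or> (\<exists>v\<in>W. \<exists>e\<in>Q. f = cp v e)
      \<or> (\<exists>v\<in>V - W. f = sp v j \<or> (\<exists>e\<in>P. f = cp v e))" for f
    unfolding Ms_def by (auto simp: image_iff)
  have Nuniq: "g = g'" if "g \<in> N" "g' \<in> N" "u \<in> g" "u \<in> g'" for g g' u
    using matchingD[OF N(1)] that by blast
  have Quniq: "e = e'" if "e \<in> Q" "e' \<in> Q" "w \<in> e" "w \<in> e'" for e e' w
    using matchingD[OF Qm] that by blast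
  have Puniq: "e = e'" if "e \<in> P" "e' \<in> P" "w \<in> e" "w \<in> e'" for e e' w
    using matchingD[OF jP(2)] that by blast
  have uniq: "f1 = f2" if "f1 \<in> Ms" "f2 \<in> Ms" "x \<in> f1" "x \<in> f2" for f1 f2 x
  proof (cases x)
    case (Inl u)
    show ?thesis
    proof (cases "u \<in> W")
      case True
      have "\<exists>g\<in>N. f = Inl ` g \<and> u \<in> g" if "f \<in> Ms" "x \<in> f" for f
        using that True Inl unfolding memMs by auto
      then show ?thesis using that Nuniq by metis
    next
      case False
      have "f = sp u j" if "f \<in> Ms" "x \<in> f" for f
        using that False Inl unfolding memMs W_def by auto
      then show ?thesis using that by metis
    qed
  next
    case (Inr p)
    obtain v w where p: "p = (v, w)" by (cases p)
    show ?thesis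
    proof (cases "v \<in> W")
      case True
      have "\<exists>e\<in>Q. f = cp v e \<and> w \<in> e" if "f \<in> Ms" "x \<in> f" for f
        using that True Inr p unfolding memMs by auto
      then show ?thesis using that Quniq by metis
    next
      case False
      show ?thesis
      proof (cases "w = j")
        case True
        have "f = sp v j" if "f \<in> Ms" "x \<in> f" for f
          using that False Inr p True jP(3) unfolding memMs by auto
        then show ?thesis using that by metis
      next
        case wj: False
        have "\<exists>e\<in>P. f = cp v e \<and> w \<in> e" if "f \<in> Ms" "x \<in> f" for f
          using that False Inr p wj unfolding memMs by auto
        then show ?thesis using that Puniq by metis
      qed
    qed
  qed
  have MsC: "Ms \<subseteq> CE"
  proof
    fix f assume "f \<in> Ms"
    then consider (a) g where "g \<in> N" "f = Inl ` g" | (b) v e where "v \<in> W" "e \<in> Q" "f = cp v e"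
      | (c) v where "v \<in> V - W" "f = sp v j" | (d) v e where "v \<in> V - W" "e \<in> P" "f = cp v e"
      unfolding memMs by blast
    then show "f \<in> CE"
    proof cases
      case a then show ?thesis unfolding mem_CE using NE by blast
    next
      case b then have "v \<in> V" "e \<in> path_edges m" using WV QE by auto
      then show ?thesis unfolding mem_CE using b(3) by blast
    next
      case c then have "v \<in> V" by auto
      then show ?thesis unfolding mem_CE using c(2) jP(1) by blast
    next
      case d then have "v \<in> V" "e \<in> path_edges m" using PE by auto
      then show ?thesis unfolding mem_CE using d(3) by blast
    qed
  qed
  have matMs: "matching CE Ms"
    unfolding matching_def
  proof (intro conjI MsC ballI impI)
    fix f1 f2 assume h: "f1 \<in> Ms" "f2 \<in> Ms" "f1 \<noteq> f2"
    show "f1 \<inter> f2 = {}"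
    proof (rule ccontr)
      assume "f1 \<inter> f2 \<noteq> {}"
      then obtain x where "x \<in> f1" "x \<in> f2" by blast
      then show False using uniq[OF h(1,2)] h(3) by blast
    qed
  qed
  have satL: "Inl u \<in> \<Union>Ms" if "u \<in> V" for u
  proof (cases "u \<in> W")
    case True
    then obtain g where g: "g \<in> N" "u \<in> g" unfolding W_def by blast
    then have "Inl ` g \<in> Ms" unfolding memMs by blast
    then show ?thesis using g(2) by blast
  next
    case False
    then have "sp u j \<in> Ms" using that unfolding memMs by blast
    then show ?thesis by (auto simp: sp_def)
  qed
  have domMs: "\<forall>f\<in>CE. f \<inter> \<Union>Ms \<noteq> {}"
  proof
    fix f assume "f \<in> CE"
    then consider (a) g where "g \<in> E" "f = Inl ` g"
      | (b) v e where "v \<in> V" "e \<in> path_edges m" "f = cp v e"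
      | (c) v w where "v \<in> V" "w < m" "f = sp v w"
      unfolding mem_CE by blast
    then show "f \<inter> \<Union>Ms \<noteq> {}"
    proof cases
      case a
      then obtain u u' where "u \<in> V" "g = {u, u'}" using E_edge by blast
      then show ?thesis using a satL by blast
    next
      case c then show ?thesis using satL by (auto simp: sp_def)
    next
      case b
      show ?thesis
      proof (cases "v \<in> W")
        case True
        have "e \<inter> \<Union>Q \<noteq> {}" using maximal_meets[OF Q(1) b(2) pe_nonempty[OF b(2)]] .
        then obtain y q where y: "y \<in> e" "q \<in> Q" "y \<in> q" by blast
        have "cp v q \<in> Ms" using True y unfolding memMs by blast
        moreover have "Inr (v, y) \<in> cp v q" using y by simp
        ultimately have "Inr (v, y) \<in> \<Union>Ms" by blast
        moreover have "Inr (v, y) \<in> f" using b y by simp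
        ultimately show ?thesis by blast
      next
        case False
        then have vV: "v \<in> V - W" using b by blast
        obtain y where y: "y \<in> e" "y \<in> \<Union>P \<or> y = j" using jP(4) b(2) by blast
        have "Inr (v, y) \<in> \<Union>Ms"
        proof (cases "y = j")
          case True
          have "sp v j \<in> Ms" using vV unfolding memMs by blast
          moreover have "Inr (v, y) \<in> sp v j" using True by simp
          ultimately show ?thesis by blast
        next
          case False
          then obtain q where "q \<in> P" "y \<in> q" using y by blast
          then have "cp v q \<in> Ms" using vV unfolding memMs by blast
          moreover have "Inr (v, y) \<in> cp v q" using \<open>y \<in> q\<close> by simp
          ultimately show ?thesis by blast
        qed
        moreover have "Inr (v, y) \<in> f" using b y by simp
        ultimately show ?thesis by blast
      qed
    qed
  qed
  have maxMs: "maximal_matching CE Ms" by (rule dom_maximal[OF matMs domMs])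
  have finN: "finite N" using NE finE finite_subset by blast
  have finW: "finite W" using WV finV finite_subset by blast
  have finQ: "finite Q" using QE finite_path_edges finite_subset by blast
  have finP: "finite P" using PE finite_path_edges finite_subset by blast
  have c1: "card ((image Inl) ` N :: ('a + 'a \<times> nat) set set) \<le> card N" by (rule card_image_le[OF finN])
  have c2: "card (\<Union>v\<in>W. cp v ` Q) \<le> card W * sP"
  proof -
    have "card (\<Union>v\<in>W. cp v ` Q) \<le> (\<Sum>v\<in>W. card (cp v ` Q))" by (rule card_UN_le[OF finW])
    also have "\<dots> \<le> (\<Sum>v\<in>W. sP)"
    proof (rule sum_mono)
      fix v show "card (cp v ` Q) \<le> sP" using card_image_le[OF finQ, of "cp v"] Q(2) by simp
    qed
    finally show ?thesis by simp
  qed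
  have c3: "card (\<Union>v\<in>V - W. insert (sp v j) (cp v ` P)) \<le> card (V - W) * (sP + dl)"
  proof -
    have "card (\<Union>v\<in>V - W. insert (sp v j) (cp v ` P)) \<le> (\<Sum>v\<in>V - W. card (insert (sp v j) (cp v ` P)))"
      by (rule card_UN_le) (use finV in auto)
    also have "\<dots> \<le> (\<Sum>v\<in>V - W. sP + dl)"
    proof (rule sum_mono)
      fix v
      have "card (insert (sp v j) (cp v ` P)) \<le> card (cp v ` P) + 1"
        using finP by (simp add: card_insert_if)
      also have "\<dots> \<le> card P + 1" using card_image_le[OF finP, of "cp v"] by simp
      finally show "card (insert (sp v j) (cp v ` P)) \<le> sP + dl" using jP(5) by linarith
    qed
    finally show ?thesis by simp
  qed
  have cMs: "card Ms \<le> card N + card W * sP + card (V - W) * (sP + dl)"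
  proof -
    have "card Ms \<le> card ((image Inl) ` N :: ('a + 'a \<times> nat) set set) + card (\<Union>v\<in>W. cp v ` Q)
        + card (\<Union>v\<in>V - W. insert (sp v j) (cp v ` P))"
      unfolding Ms_def by (meson add_le_mono1 card_Un_le order.trans)
    then show ?thesis using c1 c2 c3 by linarith
  qed
  have cV: "card V = card W + card (V - W)"
    using card_Diff_subset[OF finW WV] card_mono[OF finV WV] by simp
  have eq: "card N + card W * sP + card (V - W) * (sP + dl) = card V * sP + card N + card (V - W) * dl"
    unfolding cV by (simp add: algebra_simps)
  have "card N + card W * sP + card (V - W) * (sP + dl) =
     (if m mod 3 = 1 then card V * sP + matching_number E + (card V - 2 * matching_number E)
      else card V * sP)"
    unfolding eq using N(2) cW cV unfolding dl_def by (cases "m mod 3 = 1") auto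
  then show ?thesis using maxMs cMs by auto
qed

lemma main:
  "saturation_number CE =
    (if m mod 3 = 1 then card V * sP + matching_number E + (card V - 2 * matching_number E)
     else card V * sP)"
  using UB LB_final sat_eqI[OF finCE] by blast

end


theorem theorem2p4:
  fixes V :: "'a set" and E :: "'a set set" and m :: nat
  assumes "simple_graph V E" and "m \<ge> 1"
  shows "saturation_number (corona_edges V E (path_verts m) (path_edges m)) =
    (if m mod 3 = 1
     then card V * saturation_number (path_edges m) + matching_number E
          + (card V - 2 * matching_number E)
     else card V * saturation_number (path_edges m))"
proof -
  interpret cor V E m using assms by unfold_locales
  show ?thesis by (rule main)
qed

end
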